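(* For every $q\in\mathbf H^1_{\mathbb H}$, $$\sup_{\gamma\in PSL(2,\mathfrak L)}\Re(\gamma(q))<\infty\qquad\text{and}\qquad \sup_{\gamma\in PSL(2,\mathfrak H)}\Re(\gamma(q))<\infty.$$
   Context: $\mathbb H$ is the real quaternions, $\mathbf H^1_{\mathbb H}=\{q:\Re q>0\}$. Quaternionic matrices act by $q\mapsto(aq+b)(cq+d)^{-1}$. $\Im\mathbb H(\mathbb Z)=\{b\mathbf i+c\mathbf j+d\mathbf k:b,c,d\in\mathbb Z\}$, $\tau_\omega(q)=q+\omega$, $T(q)=q^{-1}$. $PSL(2,\mathfrak L)$ is the group generated by $T$ and the $\tau_\omega$, $\omega\in\Im\mathbb H(\mathbb Z)$. For a Hurwitz unit $u$ (one of the 24 quaternions $\pm1,\pm\mathbf i,\pm\mathbf j,\pm\mathbf k,\frac12(\pm1\pm\mathbf i\pm\mathbf j\pm\mathbf k)$), $D_u$ is the map $q\mapsto uqu^{-1}$ (matrix $\mathrm{diag}(u,u)$); $PSL(2,\mathfrak H)$ is the group generated by $T$, the $\tau_\omega$ and all $D_u$. All these elements are represented by matrices with Hurwitz-integer entries satisfying the (BG) conditions $\bar A^tKA=K$, $K=\begin{pmatrix}0&1\\1&0\end{pmatrix}$. *)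

theory Defs
  imports Complex_Main
begin

datatype quat = Quat (qre: real) (qi: real) (qj: real) (qk: real)

definition qzero :: quat where "qzero = Quat 0 0 0 0"
definition qone :: quat where "qone = Quat 1 0 0 0"

definition qadd :: "quat \<Rightarrow> quat \<Rightarrow> quat" where
  "qadd p q = Quat (qre p + qre q) (qi p + qi q) (qj p + qj q) (qk p + qk q)"

definition qneg :: "quat \<Rightarrow> quat" where
  "qneg p = Quat (- qre p) (- qi p) (- qj p) (- qk p)"

text \<open>Hamilton product (i^2 = j^2 = k^2 = ijk = -1).\<close>
definition qmult :: "quat \<Rightarrow> quat \<Rightarrow> quat" where
  "qmult p q = Quat
     (qre p * qre q - qi p * qi q - qj p * qj q - qk p * qk q)
     (qre p * qi q + qi p * qre q + qj p * qk q - qk p * qj q)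
     (qre p * qj q - qi p * qk q + qj p * qre q + qk p * qi q)
     (qre p * qk q + qi p * qj q - qj p * qi q + qk p * qre q)"

definition qnormsq :: "quat \<Rightarrow> real" where
  "qnormsq p = (qre p)\<^sup>2 + (qi p)\<^sup>2 + (qj p)\<^sup>2 + (qk p)\<^sup>2"

text \<open>Multiplicative inverse (conjugate over squared norm); the inverse of 0 is 0.\<close>
definition qinv :: "quat \<Rightarrow> quat" where
  "qinv p = Quat (qre p / qnormsq p) (- qi p / qnormsq p) (- qj p / qnormsq p) (- qk p / qnormsq p)"

text \<open>A 2x2 quaternionic matrix (a b; c d) is represented as the tuple (a, b, c, d).\<close>
type_synonym qmat = "quat \<times> quat \<times> quat \<times> quat"

definition qmat_mult :: "qmat \<Rightarrow> qmat \<Rightarrow> qmat" where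
  "qmat_mult M N = (case M of (a, b, c, d) \<Rightarrow> case N of (a', b', c', d') \<Rightarrow>
     (qadd (qmult a a') (qmult b c'), qadd (qmult a b') (qmult b d'),
      qadd (qmult c a') (qmult d c'), qadd (qmult c b') (qmult d d')))"

definition qmat_id :: qmat where "qmat_id = (qone, qzero, qzero, qone)"

definition mobius :: "qmat \<Rightarrow> quat \<Rightarrow> quat" where
  "mobius M q = (case M of (a, b, c, d) \<Rightarrow>
     qmult (qadd (qmult a q) b) (qinv (qadd (qmult c q) d)))"

definition H1 :: "quat set" where "H1 = {q. qre q > 0}"

definition ImHZ :: "quat set" where
  "ImHZ = {Quat 0 (of_int b) (of_int c) (of_int d) | b c d. True}"

definition hurwitz_units :: "quat set" where
  "hurwitz_units =
     {Quat 1 0 0 0, Quat (-1) 0 0 0, Quat 0 1 0 0, Quat 0 (-1) 0 0,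
      Quat 0 0 1 0, Quat 0 0 (-1) 0, Quat 0 0 0 1, Quat 0 0 0 (-1)}
   \<union> {Quat (s1 / 2) (s2 / 2) (s3 / 2) (s4 / 2) | s1 s2 s3 s4.
        s1 \<in> {1, -1} \<and> s2 \<in> {1, -1} \<and> s3 \<in> {1, -1} \<and> s4 \<in> {1, -1}}"

definition T_mat :: qmat where "T_mat = (qzero, qone, qone, qzero)"
definition tau_mat :: "quat \<Rightarrow> qmat" where "tau_mat w = (qone, w, qzero, qone)"
definition D_mat :: "quat \<Rightarrow> qmat" where "D_mat u = (u, qzero, qzero, u)"

text \<open>PSL(2,L): generated by T and tau_w, w in ImHZ.  Each generator's inverse is
  again a generator (T^2 = 1, tau_w^{-1} = tau_{-w}), so the generated monoid is the
  generated group.\<close>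
inductive_set PSL2_L :: "qmat set" where
  L_id: "qmat_id \<in> PSL2_L"
| L_T: "g \<in> PSL2_L \<Longrightarrow> qmat_mult T_mat g \<in> PSL2_L"
| L_tau: "w \<in> ImHZ \<Longrightarrow> g \<in> PSL2_L \<Longrightarrow> qmat_mult (tau_mat w) g \<in> PSL2_L"

text \<open>PSL(2,H): generated by T, the tau_w and all D_u, u a Hurwitz unit
  (D_u^{-1} = D_{u^{-1}} with u^{-1} again a Hurwitz unit).\<close>
inductive_set PSL2_H :: "qmat set" where
  H_id: "qmat_id \<in> PSL2_H"
| H_T: "g \<in> PSL2_H \<Longrightarrow> qmat_mult T_mat g \<in> PSL2_H"
| H_tau: "w \<in> ImHZ \<Longrightarrow> g \<in> PSL2_H \<Longrightarrow> qmat_mult (tau_mat w) g \<in> PSL2_H"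
| H_D: "u \<in> hurwitz_units \<Longrightarrow> g \<in> PSL2_H \<Longrightarrow> qmat_mult (D_mat u) g \<in> PSL2_H"

end

theory Submission
  imports Defs
begin

definition hurw :: "quat \<Rightarrow> bool" where
  "hurw p \<longleftrightarrow> (\<exists>a b c d :: int. p = Quat (of_int a/2) (of_int b + of_int a/2) (of_int c + of_int a/2) (of_int d + of_int a/2))"

lemma qmult_hform:
  fixes a b c d e f g h :: real
  shows "qmult (Quat (a/2) (b + a/2) (c + a/2) (d + a/2)) (Quat (e/2) (f + e/2) (g + e/2) (h + e/2))
    = Quat ((-a*e - a*f - a*g - a*h - b*e - 2*b*f - c*e - 2*c*g - d*e - 2*d*h)/2) ((a*e + a*f + a*h + b*e + b*f + c*e + c*g + c*h - d*g + d*h) + (-a*e - a*f - a*g - a*h - b*e - 2*b*f - c*e - 2*c*g - d*e - 2*d*h)/2) ((a*e + a*f + a*g + b*f - b*h + c*e + c*g + d*e + d*f + d*h) + (-a*e - a*f - a*g - a*h - b*e - 2*b*f - c*e - 2*c*g - d*e - 2*d*h)/2) ((a*e + a*g + a*h + b*e + b*f + b*g - c*f + c*g + d*e + d*h) + (-a*e - a*f - a*g - a*h - b*e - 2*b*f - c*e - 2*c*g - d*e - 2*d*h)/2)"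
  by (simp add: qmult_def field_simps)

lemma hurw_mult: assumes "hurw p" "hurw q" shows "hurw (qmult p q)"
proof -
  obtain a b c d :: int where p: "p = Quat (of_int a/2) (of_int b + of_int a/2) (of_int c + of_int a/2) (of_int d + of_int a/2)"
    using assms(1) unfolding hurw_def by blast
  obtain e f g h :: int where q: "q = Quat (of_int e/2) (of_int f + of_int e/2) (of_int g + of_int e/2) (of_int h + of_int e/2)"
    using assms(2) unfolding hurw_def by blast
  show ?thesis unfolding hurw_def p q qmult_hform
    apply (rule exI[of _ "-a*e - a*f - a*g - a*h - b*e - 2*b*f - c*e - 2*c*g - d*e - 2*d*h"])
    apply (rule exI[of _ "a*e + a*f + a*h + b*e + b*f + c*e + c*g + c*h - d*g + d*h"])
    apply (rule exI[of _ "a*e + a*f + a*g + b*f - b*h + c*e + c*g + d*e + d*f + d*h"])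
    apply (rule exI[of _ "a*e + a*g + a*h + b*e + b*f + b*g - c*f + c*g + d*e + d*h"])
    by simp
qed

lemma qadd_hform:
  fixes a b c d e f g h :: real
  shows "qadd (Quat (a/2) (b + a/2) (c + a/2) (d + a/2)) (Quat (e/2) (f + e/2) (g + e/2) (h + e/2))
    = Quat ((a+e)/2) ((b+f) + (a+e)/2) ((c+g) + (a+e)/2) ((d+h) + (a+e)/2)"
  by (simp add: qadd_def field_simps)

lemma hurw_add: assumes "hurw p" "hurw q" shows "hurw (qadd p q)"
proof -
  obtain a b c d :: int where p: "p = Quat (of_int a/2) (of_int b + of_int a/2) (of_int c + of_int a/2) (of_int d + of_int a/2)"
    using assms(1) unfolding hurw_def by blast
  obtain e f g h :: int where q: "q = Quat (of_int e/2) (of_int f + of_int e/2) (of_int g + of_int e/2) (of_int h + of_int e/2)"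
    using assms(2) unfolding hurw_def by blast
  show ?thesis unfolding hurw_def
    apply (rule exI[of _ "a+e"]) apply (rule exI[of _ "b+f"])
    apply (rule exI[of _ "c+g"]) apply (rule exI[of _ "d+h"])
    unfolding p q qadd_hform by simp
qed

lemma hurw_zero: "hurw qzero"
  unfolding hurw_def qzero_def by (rule exI[of _ 0], simp)

lemma hurw_one: "hurw qone"
  unfolding hurw_def qone_def
  by (rule exI[of _ 2], rule exI[of _ "-1"], rule exI[of _ "-1"], rule exI[of _ "-1"], simp)

lemma hurw_int: "hurw (Quat (of_int a) (of_int b) (of_int c) (of_int d))"
  unfolding hurw_def
  by (rule exI[of _ "2*a"], rule exI[of _ "b-a"], rule exI[of _ "c-a"], rule exI[of _ "d-a"], simp)

lemma hurw_ImHZ: "w \<in> ImHZ \<Longrightarrow> hurw w"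
  unfolding ImHZ_def using hurw_int[of 0] by auto

lemma hurw_half:
  assumes "odd m0" "odd m1" "odd m2" "odd m3"
  shows "hurw (Quat (of_int m0/2) (of_int m1/2) (of_int m2/2) (of_int m3/2))"
proof -
  obtain k1 where k1: "m1 - m0 = 2*k1" using assms by (metis dvd_def even_diff odd_add)
  obtain k2 where k2: "m2 - m0 = 2*k2" using assms by (metis dvd_def even_diff odd_add)
  obtain k3 where k3: "m3 - m0 = 2*k3" using assms by (metis dvd_def even_diff odd_add)
  have e1: "real_of_int m1 / 2 = of_int k1 + of_int m0 / 2"
    using arg_cong[OF k1, of real_of_int] by simp
  have e2: "real_of_int m2 / 2 = of_int k2 + of_int m0 / 2"
    using arg_cong[OF k2, of real_of_int] by simp
  have e3: "real_of_int m3 / 2 = of_int k3 + of_int m0 / 2"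
    using arg_cong[OF k3, of real_of_int] by simp
  show ?thesis unfolding hurw_def e1 e2 e3
    by (rule exI[of _ m0], rule exI[of _ k1], rule exI[of _ k2], rule exI[of _ k3]) (rule refl)
qed

lemma sign_int: "(s::real) \<in> {1,-1} \<Longrightarrow> \<exists>m::int. odd m \<and> s = of_int m"
  by (auto intro: exI[of _ 1] exI[of _ "-1"])

lemma hurw_units: "u \<in> hurwitz_units \<Longrightarrow> hurw u"
proof -
  have h1: "hurw (Quat 1 0 0 0)" using hurw_int[of 1 0 0 0] by simp
  have h2: "hurw (Quat (-1) 0 0 0)" using hurw_int[of "-1" 0 0 0] by simp
  have h3: "hurw (Quat 0 1 0 0)" using hurw_int[of 0 1 0 0] by simp
  have h4: "hurw (Quat 0 (-1) 0 0)" using hurw_int[of 0 "-1" 0 0] by simp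
  have h5: "hurw (Quat 0 0 1 0)" using hurw_int[of 0 0 1 0] by simp
  have h6: "hurw (Quat 0 0 (-1) 0)" using hurw_int[of 0 0 "-1" 0] by simp
  have h7: "hurw (Quat 0 0 0 1)" using hurw_int[of 0 0 0 1] by simp
  have h8: "hurw (Quat 0 0 0 (-1))" using hurw_int[of 0 0 0 "-1"] by simp
  have h9: "hurw (Quat (s1 / 2) (s2 / 2) (s3 / 2) (s4 / 2))"
    if hs: "s1 \<in> {1, -1}" "s2 \<in> {1, -1}" "s3 \<in> {1, -1}" "s4 \<in> {1, -1}" for s1 s2 s3 s4
  proof -
    obtain m1 where m1: "odd m1" "s1 = of_int m1" using sign_int[OF hs(1)] by blast
    obtain m2 where m2: "odd m2" "s2 = of_int m2" using sign_int[OF hs(2)] by blast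
    obtain m3 where m3: "odd m3" "s3 = of_int m3" using sign_int[OF hs(3)] by blast
    obtain m4 where m4: "odd m4" "s4 = of_int m4" using sign_int[OF hs(4)] by blast
    show ?thesis unfolding m1(2) m2(2) m3(2) m4(2)
      by (rule hurw_half) (fact m1(1) m2(1) m3(1) m4(1))+
  qed
  assume "u \<in> hurwitz_units"
  then show ?thesis unfolding hurwitz_units_def Un_iff
  proof (elim disjE)
    assume "u \<in> {Quat 1 0 0 0, Quat (-1) 0 0 0, Quat 0 1 0 0, Quat 0 (-1) 0 0,
      Quat 0 0 1 0, Quat 0 0 (-1) 0, Quat 0 0 0 1, Quat 0 0 0 (-1)}"
    then show ?thesis unfolding insert_iff empty_iff
      by (elim disjE FalseE) (simp_all only: h1 h2 h3 h4 h5 h6 h7 h8)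
  next
    assume "u \<in> {Quat (s1 / 2) (s2 / 2) (s3 / 2) (s4 / 2) | s1 s2 s3 s4.
        s1 \<in> {1, -1} \<and> s2 \<in> {1, -1} \<and> s3 \<in> {1, -1} \<and> s4 \<in> {1, -1}}"
    then obtain s1 s2 s3 s4 where "u = Quat (s1 / 2) (s2 / 2) (s3 / 2) (s4 / 2)"
        "s1 \<in> {1, -1}" "s2 \<in> {1, -1}" "s3 \<in> {1, -1}" "s4 \<in> {1, -1}"
      by (simp only: mem_Collect_eq) blast
    then show ?thesis using h9 by simp
  qed
qed

definition qconj :: "quat \<Rightarrow> quat" where
  "qconj p = Quat (qre p) (- qi p) (- qj p) (- qk p)"

definition qdot :: "quat \<Rightarrow> quat \<Rightarrow> real" where
  "qdot x y = qre x * qre y + qi x * qi y + qj x * qj y + qk x * qk y"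

definition Alg :: "qmat \<Rightarrow> bool" where
  "Alg M = (case M of (a, b, c, d) \<Rightarrow>
     qdot a c = 0 \<and> qdot b d = 0 \<and> qdot a b = 0 \<and> qdot c d = 0 \<and>
     qadd (qmult (qconj a) d) (qmult (qconj c) b) = qone \<and>
     qadd (qmult b (qconj c)) (qmult a (qconj d)) = qone)"

lemma Alg_id: "Alg qmat_id"
  by (simp add: Alg_def qmat_id_def qdot_def qone_def qzero_def qadd_def qmult_def qconj_def)

lemma Alg_T: assumes "Alg M" shows "Alg (qmat_mult T_mat M)"
proof -
  obtain a b c d where M: "M = (a, b, c, d)" by (cases M) auto
  obtain a0 a1 a2 a3 where a: "a = Quat a0 a1 a2 a3" by (cases a)
  obtain b0 b1 b2 b3 where b: "b = Quat b0 b1 b2 b3" by (cases b)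
  obtain c0 c1 c2 c3 where c: "c = Quat c0 c1 c2 c3" by (cases c)
  obtain d0 d1 d2 d3 where d: "d = Quat d0 d1 d2 d3" by (cases d)
  show ?thesis using assms unfolding M a b c d
    by (simp add: Alg_def qmat_mult_def T_mat_def qdot_def qone_def qzero_def qadd_def qmult_def qconj_def;
        (elim conjE; intro conjI; algebra))
qed

lemma Alg_tau: assumes "Alg M" "qre w = 0" shows "Alg (qmat_mult (tau_mat w) M)"
proof -
  obtain a b c d where M: "M = (a, b, c, d)" by (cases M) auto
  obtain a0 a1 a2 a3 where a: "a = Quat a0 a1 a2 a3" by (cases a)
  obtain b0 b1 b2 b3 where b: "b = Quat b0 b1 b2 b3" by (cases b)
  obtain c0 c1 c2 c3 where c: "c = Quat c0 c1 c2 c3" by (cases c)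
  obtain d0 d1 d2 d3 where d: "d = Quat d0 d1 d2 d3" by (cases d)
  obtain w1 w2 w3 where w: "w = Quat 0 w1 w2 w3" using assms(2) by (cases w) auto
  show ?thesis using assms(1) unfolding M a b c d w
    by (simp add: Alg_def qmat_mult_def tau_mat_def qdot_def qone_def qzero_def qadd_def qmult_def qconj_def;
        (elim conjE; intro conjI; algebra))
qed

lemma Alg_D: assumes "Alg M" "qnormsq u = 1" shows "Alg (qmat_mult (D_mat u) M)"
proof -
  obtain a b c d where M: "M = (a, b, c, d)" by (cases M) auto
  obtain a0 a1 a2 a3 where a: "a = Quat a0 a1 a2 a3" by (cases a)
  obtain b0 b1 b2 b3 where b: "b = Quat b0 b1 b2 b3" by (cases b)
  obtain c0 c1 c2 c3 where c: "c = Quat c0 c1 c2 c3" by (cases c)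
  obtain d0 d1 d2 d3 where d: "d = Quat d0 d1 d2 d3" by (cases d)
  obtain u0 u1 u2 u3 where u: "u = Quat u0 u1 u2 u3" by (cases u)
  show ?thesis using assms unfolding M a b c d u
    by (simp add: Alg_def qmat_mult_def D_mat_def qdot_def qone_def qzero_def qadd_def qmult_def qconj_def qnormsq_def power2_eq_square;
        (elim conjE; intro conjI; algebra))
qed

lemma hurw_norm: assumes "hurw p" "p \<noteq> qzero" shows "qnormsq p \<ge> 1/4"
proof -
  obtain a b c d :: int where p: "p = Quat (of_int a/2) (of_int b + of_int a/2) (of_int c + of_int a/2) (of_int d + of_int a/2)"
    using assms(1) unfolding hurw_def by blast
  define S where "S = a^2 + (2*b+a)^2 + (2*c+a)^2 + (2*d+a)^2"
  have N: "qnormsq p = of_int S / 4"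
    unfolding p S_def qnormsq_def by (simp add: power2_eq_square field_simps)
  have "S \<noteq> 0"
  proof
    assume "S = 0"
    then have "a = 0 \<and> 2*b+a = 0 \<and> 2*c+a = 0 \<and> 2*d+a = 0"
      unfolding S_def by (smt (verit) zero_le_power2 power2_eq_square mult_eq_0_iff)
    then have "a = 0" "b = 0" "c = 0" "d = 0" by auto
    then show False using assms(2) p by (simp add: qzero_def)
  qed
  moreover have "S \<ge> 0" unfolding S_def by simp
  ultimately have "S \<ge> 1" by simp
  then show ?thesis unfolding N by simp
qed


lemma mob_bound:
  assumes A: "Alg (a, b, c, d)" and hc: "hurw c" and hd: "hurw d" and x: "qre q > 0"
  shows "qre (mobius (a, b, c, d) q) \<le> 4 / qre q + 4 * qre q"
proof -
  obtain a0 a1 a2 a3 where a: "a = Quat a0 a1 a2 a3" by (cases a)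
  obtain b0 b1 b2 b3 where b: "b = Quat b0 b1 b2 b3" by (cases b)
  obtain c0 c1 c2 c3 where c: "c = Quat c0 c1 c2 c3" by (cases c)
  obtain d0 d1 d2 d3 where d: "d = Quat d0 d1 d2 d3" by (cases d)
  obtain x q1 q2 q3 where q: "q = Quat x q1 q2 q3" by (cases q)
  define p where "p = qadd (qmult a q) b"
  define r where "r = qadd (qmult c q) d"
  have xpos: "x > 0" using x q by simp
  have qx: "qre q = x" using q by simp
  have id1: "qdot p r = qnormsq q * qdot a c + qdot b d
      + qdot (qadd (qmult (qconj a) d) (qmult (qconj c) b)) q"
    unfolding p_def r_def a b c d q
    by (simp add: qdot_def qnormsq_def qadd_def qmult_def qconj_def power2_eq_square; algebra)
  have key1: "qdot p r = x"
    using A unfolding id1 by (simp add: Alg_def q qdot_def qone_def)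
  have key2: "qnormsq r = x^2 * qnormsq c + qnormsq (qadd (qmult c (Quat 0 q1 q2 q3)) d)"
    using A unfolding r_def a b c d q
    by (simp add: Alg_def qdot_def qnormsq_def qone_def qzero_def qadd_def qmult_def qconj_def power2_eq_square; elim conjE; algebra)
  have re: "qre (mobius (a, b, c, d) q) = qdot p r / qnormsq r"
    unfolding p_def r_def mobius_def
    by (simp add: qmult_def qinv_def qdot_def add_divide_distrib diff_divide_distrib algebra_simps)
  have Nnn: "qnormsq z \<ge> 0" for z unfolding qnormsq_def by simp
  show ?thesis
  proof (cases "c = qzero")
    case False
    have "qnormsq c \<ge> 1/4" using hurw_norm[OF hc False] .
    then have "x^2 * qnormsq c \<ge> x^2 * (1/4)" by (rule mult_left_mono) simp
    then have "qnormsq r \<ge> x^2 / 4" using key2 Nnn[of "qadd (qmult c (Quat 0 q1 q2 q3)) d"]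
      by linarith
    moreover have "x^2/4 > 0" using xpos by simp
    ultimately have r4: "x^2/4 \<le> qnormsq r" "0 < x^2/4" by auto
    have "0 < qnormsq r" using r4 by linarith
    have "x / qnormsq r \<le> x / (x^2/4)"
      using r4 xpos \<open>0 < qnormsq r\<close> by (intro divide_left_mono mult_pos_pos) auto
    also have "\<dots> = 4 / x" using xpos by (simp add: power2_eq_square field_simps)
    finally have "qre (mobius (a, b, c, d) q) \<le> 4 / x" using re key1 by simp
    moreover have "4 * x > 0" using xpos by simp
    ultimately show ?thesis unfolding qx by linarith
  next
    case True
    have rd: "r = d" unfolding r_def True d by (simp add: qmult_def qadd_def qzero_def)
    have "d \<noteq> qzero"
    proof
      assume "d = qzero"
      then show False using A True
        by (simp add: Alg_def qone_def qzero_def qadd_def qmult_def qconj_def)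
    qed
    then have "qnormsq r \<ge> 1/4" using hurw_norm[OF hd] rd by simp
    then have "0 < qnormsq r" by linarith
    then have "x / qnormsq r \<le> x / (1/4)"
      using xpos \<open>qnormsq r \<ge> 1/4\<close> by (intro divide_left_mono mult_pos_pos) auto
    then have "qre (mobius (a, b, c, d) q) \<le> 4 * x" using re key1 by simp
    moreover have "4 / x > 0" using xpos by simp
    ultimately show ?thesis unfolding qx by linarith
  qed
qed

lemma units_norm: "u \<in> hurwitz_units \<Longrightarrow> qnormsq u = 1"
proof -
  have h9: "qnormsq (Quat (s1 / 2) (s2 / 2) (s3 / 2) (s4 / 2)) = 1"
    if hs: "s1 \<in> {1, -1}" "s2 \<in> {1, -1}" "s3 \<in> {1, -1}" "s4 \<in> {1, -1}" for s1 s2 s3 s4 :: real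
  proof -
    have "s1^2 = 1" "s2^2 = 1" "s3^2 = 1" "s4^2 = 1" using hs by auto
    then show ?thesis by (simp add: qnormsq_def power_divide)
  qed
  assume "u \<in> hurwitz_units"
  then show ?thesis unfolding hurwitz_units_def Un_iff
  proof (elim disjE)
    assume "u \<in> {Quat 1 0 0 0, Quat (-1) 0 0 0, Quat 0 1 0 0, Quat 0 (-1) 0 0,
      Quat 0 0 1 0, Quat 0 0 (-1) 0, Quat 0 0 0 1, Quat 0 0 0 (-1)}"
    then show ?thesis unfolding insert_iff empty_iff
      by (elim disjE FalseE) (simp_all add: qnormsq_def)
  next
    assume "u \<in> {Quat (s1 / 2) (s2 / 2) (s3 / 2) (s4 / 2) | s1 s2 s3 s4.
        s1 \<in> {1, -1} \<and> s2 \<in> {1, -1} \<and> s3 \<in> {1, -1} \<and> s4 \<in> {1, -1}}"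
    then obtain s1 s2 s3 s4 where "u = Quat (s1 / 2) (s2 / 2) (s3 / 2) (s4 / 2)"
        "s1 \<in> {1, -1}" "s2 \<in> {1, -1}" "s3 \<in> {1, -1}" "s4 \<in> {1, -1}"
      by (simp only: mem_Collect_eq) blast
    then show ?thesis using h9 by simp
  qed
qed

definition Inv :: "qmat \<Rightarrow> bool" where
  "Inv M = (case M of (a, b, c, d) \<Rightarrow> hurw a \<and> hurw b \<and> hurw c \<and> hurw d \<and> Alg M)"

lemma qmult_one_left: "qmult qone p = p"
  by (cases p) (simp add: qmult_def qone_def)
lemma qmult_zero_left: "qmult qzero p = qzero"
  by (cases p) (simp add: qmult_def qzero_def)
lemma qadd_zero_left: "qadd qzero p = p"
  by (cases p) (simp add: qadd_def qzero_def)
lemma qadd_zero_right: "qadd p qzero = p"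
  by (cases p) (simp add: qadd_def qzero_def)

lemma Inv_H: "g \<in> PSL2_H \<Longrightarrow> Inv g"
proof (induction rule: PSL2_H.induct)
  case H_id
  then show ?case using Alg_id hurw_one hurw_zero by (simp add: Inv_def qmat_id_def)
next
  case (H_T g)
  obtain a b c d where g: "g = (a, b, c, d)" by (cases g) auto
  have "Alg (qmat_mult T_mat g)" using Alg_T H_T by (simp add: Inv_def g)
  then show ?case using H_T unfolding g
    by (simp add: Inv_def qmat_mult_def T_mat_def qmult_one_left qmult_zero_left
        qadd_zero_left qadd_zero_right)
next
  case (H_tau w g)
  obtain a b c d where g: "g = (a, b, c, d)" by (cases g) auto
  have "qre w = 0" using H_tau(1) unfolding ImHZ_def by auto
  then have "Alg (qmat_mult (tau_mat w) g)" using Alg_tau H_tau by (simp add: Inv_def g)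
  moreover have "hurw w" using hurw_ImHZ H_tau(1) .
  ultimately show ?case using H_tau unfolding g
    by (simp add: Inv_def qmat_mult_def tau_mat_def qmult_one_left qmult_zero_left
        qadd_zero_left qadd_zero_right hurw_add hurw_mult)
next
  case (H_D u g)
  obtain a b c d where g: "g = (a, b, c, d)" by (cases g) auto
  have "Alg (qmat_mult (D_mat u) g)" using Alg_D H_D units_norm by (simp add: Inv_def g)
  moreover have "hurw u" using hurw_units H_D(1) .
  ultimately show ?case using H_D unfolding g
    by (simp add: Inv_def qmat_mult_def D_mat_def qmult_one_left qmult_zero_left
        qadd_zero_left qadd_zero_right hurw_add hurw_mult hurw_zero)
qed

lemma L_sub_H: "g \<in> PSL2_L \<Longrightarrow> g \<in> PSL2_H"
  by (induction rule: PSL2_L.induct) (auto intro: PSL2_H.intros)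

theorem corollary6p2:
  fixes q :: quat
  assumes "q \<in> H1"
  shows "bdd_above ((\<lambda>g. qre (mobius g q)) ` PSL2_L)
       \<and> bdd_above ((\<lambda>g. qre (mobius g q)) ` PSL2_H)"
proof -
  have x: "qre q > 0" using assms unfolding H1_def by simp
  have B: "qre (mobius g q) \<le> 4 / qre q + 4 * qre q" if "g \<in> PSL2_H" for g
  proof -
    obtain a b c d where g: "g = (a, b, c, d)" by (cases g) auto
    have "Inv g" using Inv_H that .
    then show ?thesis unfolding g Inv_def using mob_bound x by auto
  qed
  have 1: "bdd_above ((\<lambda>g. qre (mobius g q)) ` PSL2_H)"
    by (rule bdd_aboveI2[where M = "4 / qre q + 4 * qre q"]) (rule B)
  have 2: "bdd_above ((\<lambda>g. qre (mobius g q)) ` PSL2_L)"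
    by (rule bdd_aboveI2[where M = "4 / qre q + 4 * qre q"]) (rule B, rule L_sub_H)
  show ?thesis using 1 2 by blast
qed


end
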